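(* Under the hypotheses of the context, let $U$ be an integer with $U\delta\ge\bot_0+D+1$. Then for every process $p$, in the configuration $\gamma_{t_{p,U\delta+\varrho}}$ (i.e., at $p$'s event in the cut $C_{U\delta+\varrho}$), $p.v_2=\bigoplus\{q.v_0: q\in V(p,\varrho)\}$, the infimum of the registers $v_0$ over the $\varrho$-ball centered at $p$.
   Context: Let $G=(V,E)$ be a finite connected undirected graph, $|V|=n\ge 2$, $\mathcal N_p$ the set of neighbors of $p$, $d(p,q)$ the hop distance, $D$ the diameter, and $V(p,r)=\{q\in V: d(p,q)\le r\}$. Fix integers $\varrho\ge1$, $\delta=\varrho+1$, and $M\ge3$ a multiple of $\delta$; for an integer $a$, $\bar a\in\{0,\dots,M-1\}$ is its residue modulo $M$. Each process $p$ holds a clock $p.r\in\{0,\dots,M-1\}$; $p^t.r$ is its value in $\gamma_t$. Integers $a,b$ are locally comparable if $\min(\overline{a-b},\overline{b-a})\le1$, and then $b\ominus a=\overline{b-a}$ if $\overline{b-a}\le1$, else $-\overline{a-b}$. $WU$: for every edge $\{p,q\}$, $p.r,q.r$ are locally comparable. The delay of a path $p_0\ldots p_k$ is $\sum_{i<k}(p_{i+1}.r\ominus p_i.r)$. $WU_0$: $WU$ holds and all paths between any $p,q$ have the same delay $\delta_{(p,q)}$ ($\delta^t_{(p,q)}$ in $\gamma_t$). Let $\oplus$ be an associative, commutative, idempotent binary operation on a set $\mathbb S$; $\bigoplus$ of a finite nonempty set is the $\oplus$ of its elements. Each process $p$ has registers $p.v_0,p.v_1,p.v_2\in\mathbb S$,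 where $p.v_0$ is never modified. Dynamics: $p$ is enabled iff for every $q\in\mathcal N_p$, $q.r=p.r$ or $q.r=\overline{p.r+1}$. In a transition $\gamma_t\to\gamma_{t+1}$ a nonempty set of processes enabled in $\gamma_t$ is chosen (by an arbitrary daemon); each chosen $p$, reading the values of $\gamma_t$, does: if $p.r\equiv\varrho \pmod\delta$ then $p.v_1:=p.v_0$, $p.v_2:=p.v_0$; otherwise $p.v_1:=p.v_2$ and $p.v_2:=p.v_0\oplus\bigoplus\{q.v_{\omega(q)}:q\in\mathcal N_p\}$, where $\omega(q)=2$ if $q.r=p.r$ and $\omega(q)=1$ if $q.r=\overline{p.r+1}$; then $p.r:=\overline{p.r+1}$. Other processes are unchanged. Standing hypotheses: the execution $\gamma_0\gamma_1\ldots$ is infinite, $\gamma_0$ satisfies $WU_0$, and every process increments its clock infinitely often. Lifting: choose $p_0$ with $\delta^0_{(p_0,q)}\ge0$ for all $q$, let $\bot_0=p_0^0.r$, set $\widetilde{p^0.r}=\bot_0+\delta^0_{(p_0,p)}$, and $\widetilde{p^{t+1}.r}=\widetilde{p^t.r}+1$ if $p$ increments in $\gamma_t\to\gamma_{t+1}$, else $\widetilde{p^{t+1}.r}=\widetilde{p^t.r}$. For an integer $k$, $t_{p,k}$ is the smallest $t$ with $\widetilde{p^t.r}=k$, and $C_k=\{(p,t_{p,k}):p\in V\}$. *)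

theory Defs
  imports Main
begin

text \<open>Graph: vertices are the elements of a finite type 'v (so V = UNIV),
  adjacency is a symmetric irreflexive relation E.\<close>

definition walk_betw :: "('v \<Rightarrow> 'v \<Rightarrow> bool) \<Rightarrow> 'v \<Rightarrow> 'v list \<Rightarrow> 'v \<Rightarrow> bool" where
  "walk_betw E p xs q \<longleftrightarrow> xs \<noteq> [] \<and> hd xs = p \<and> last xs = q \<and> successively E xs"

definition hop_dist :: "('v \<Rightarrow> 'v \<Rightarrow> bool) \<Rightarrow> 'v \<Rightarrow> 'v \<Rightarrow> nat" where
  "hop_dist E p q = (LEAST k. \<exists>xs. walk_betw E p xs q \<and> length xs = Suc k)"

definition diameter :: "('v \<Rightarrow> 'v \<Rightarrow> bool) \<Rightarrow> nat" where
  "diameter E = Max {hop_dist E p q | p q. True}"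

definition ballV :: "('v \<Rightarrow> 'v \<Rightarrow> bool) \<Rightarrow> 'v \<Rightarrow> int \<Rightarrow> 'v set" where
  "ballV E p r = {q. int (hop_dist E p q) \<le> r}"

definition loc_comp :: "int \<Rightarrow> int \<Rightarrow> int \<Rightarrow> bool" where
  "loc_comp M a b \<longleftrightarrow> min ((a - b) mod M) ((b - a) mod M) \<le> 1"

definition ominus :: "int \<Rightarrow> int \<Rightarrow> int \<Rightarrow> int" where
  "ominus M b a = (if (b - a) mod M \<le> 1 then (b - a) mod M else - ((a - b) mod M))"

fun delay :: "int \<Rightarrow> ('v \<Rightarrow> int) \<Rightarrow> 'v list \<Rightarrow> int" where
  "delay M r (x # y # xs) = ominus M (r y) (r x) + delay M r (y # xs)"
| "delay M r _ = 0"

definition WU :: "int \<Rightarrow> ('v \<Rightarrow> 'v \<Rightarrow> bool) \<Rightarrow> ('v \<Rightarrow> int) \<Rightarrow> bool" where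
  "WU M E r \<longleftrightarrow> (\<forall>p q. E p q \<longrightarrow> loc_comp M (r p) (r q))"

definition WU0 :: "int \<Rightarrow> ('v \<Rightarrow> 'v \<Rightarrow> bool) \<Rightarrow> ('v \<Rightarrow> int) \<Rightarrow> bool" where
  "WU0 M E r \<longleftrightarrow> WU M E r \<and>
     (\<forall>p q xs ys. walk_betw E p xs q \<longrightarrow> walk_betw E p ys q \<longrightarrow> delay M r xs = delay M r ys)"

text \<open>The common delay \<open>\<delta>_(p,q)\<close> of all paths from p to q (meaningful under WU0).\<close>
definition delta :: "int \<Rightarrow> ('v \<Rightarrow> 'v \<Rightarrow> bool) \<Rightarrow> ('v \<Rightarrow> int) \<Rightarrow> 'v \<Rightarrow> 'v \<Rightarrow> int" where
  "delta M E r p q = delay M r (SOME xs. walk_betw E p xs q)"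

definition enabled :: "int \<Rightarrow> ('v \<Rightarrow> 'v \<Rightarrow> bool) \<Rightarrow> ('v \<Rightarrow> int) \<Rightarrow> 'v \<Rightarrow> bool" where
  "enabled M E r p \<longleftrightarrow> (\<forall>q. E p q \<longrightarrow> r q = r p \<or> r q = (r p + 1) mod M)"

text \<open>One transition \<open>\<gamma>_t \<rightarrow> \<gamma>_{t+1}\<close> with chosen set S; \<open>F\<close> is the big operator
  of \<open>\<oplus>\<close> (f) on finite nonempty sets.\<close>
definition step ::
  "int \<Rightarrow> int \<Rightarrow> ('v \<Rightarrow> 'v \<Rightarrow> bool) \<Rightarrow> ('s \<Rightarrow> 's \<Rightarrow> 's) \<Rightarrow> ('v \<Rightarrow> 's)
   \<Rightarrow> ('v \<Rightarrow> int) \<Rightarrow> ('v \<Rightarrow> 's) \<Rightarrow> ('v \<Rightarrow> 's) \<Rightarrow> 'v set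
   \<Rightarrow> ('v \<Rightarrow> int) \<Rightarrow> ('v \<Rightarrow> 's) \<Rightarrow> ('v \<Rightarrow> 's) \<Rightarrow> bool" where
  "step M rho E f v0 r v1 v2 S r' v1' v2' \<longleftrightarrow>
     S \<noteq> {} \<and> (\<forall>p\<in>S. enabled M E r p) \<and>
     (\<forall>p. if p \<in> S then
            r' p = (r p + 1) mod M \<and>
            (if r p mod (rho + 1) = rho then v1' p = v0 p \<and> v2' p = v0 p
             else v1' p = v2 p \<and>
                  v2' p = semilattice_set.F f
                     (insert (v0 p) ((\<lambda>q. if r q = r p then v2 q else v1 q) ` {q. E p q})))
          else r' p = r p \<and> v1' p = v1 p \<and> v2' p = v2 p)"

text \<open>Lifted (unbounded) clocks, starting from \<open>\<bot>_0 + \<delta>^0_(p0,p)\<close>.\<close>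
primrec lifted :: "int \<Rightarrow> ('v \<Rightarrow> 'v \<Rightarrow> bool) \<Rightarrow> ('v \<Rightarrow> int) \<Rightarrow> 'v \<Rightarrow> (nat \<Rightarrow> 'v set)
                    \<Rightarrow> nat \<Rightarrow> 'v \<Rightarrow> int" where
  "lifted M E r0 p0 S 0 p = r0 p0 + delta M E r0 p0 p"
| "lifted M E r0 p0 S (Suc t) p = lifted M E r0 p0 S t p + (if p \<in> S t then 1 else 0)"

definition tcut :: "int \<Rightarrow> ('v \<Rightarrow> 'v \<Rightarrow> bool) \<Rightarrow> ('v \<Rightarrow> int) \<Rightarrow> 'v \<Rightarrow> (nat \<Rightarrow> 'v set)
                    \<Rightarrow> 'v \<Rightarrow> int \<Rightarrow> nat" where
  "tcut M E r0 p0 S p k = (LEAST t. lifted M E r0 p0 S t p = k)"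

end

theory Submission
  imports Defs
begin


lemma walk_single: "walk_betw E p [p] p" by (simp add: walk_betw_def)

lemma walk_Cons: "E p q \<Longrightarrow> walk_betw E q ys x \<Longrightarrow> walk_betw E p (p#ys) x"
  by (auto simp: walk_betw_def successively_Cons)

lemma walk_Cons_inv: "walk_betw E p xs x \<Longrightarrow> length xs \<ge> 2 \<Longrightarrow>
   \<exists>q ys. xs = p # ys \<and> E p q \<and> walk_betw E q ys x \<and> length ys = length xs - 1"
  apply (cases xs)
   apply (simp add: walk_betw_def)
  subgoal for a ys
    apply (cases ys)
     apply simp
    apply (auto simp: walk_betw_def successively_Cons)
    done
  done

lemma walk_snoc: "walk_betw E p xs q \<Longrightarrow> E q y \<Longrightarrow> walk_betw E p (xs@[y]) y"
  by (auto simp: walk_betw_def successively_append_iff)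

lemma walk_len1: "walk_betw E p xs x \<Longrightarrow> length xs \<le> 1 \<Longrightarrow> x = p"
  by (cases xs) (auto simp: walk_betw_def)

lemma hop_le:
  assumes "\<exists>xs. walk_betw E p xs q"
  shows "hop_dist E p q \<le> n \<longleftrightarrow> (\<exists>xs. walk_betw E p xs q \<and> length xs \<le> Suc n)"
proof
  obtain xs where xs: "walk_betw E p xs q" using assms by blast
  have ex: "\<exists>k. \<exists>xs. walk_betw E p xs q \<and> length xs = Suc k"
  proof -
    have "length xs = Suc (length xs - 1)" using xs by (cases xs) (auto simp: walk_betw_def)
    then show ?thesis using xs by blast
  qed
  assume "hop_dist E p q \<le> n"
  moreover from LeastI_ex[OF ex] obtain ys where "walk_betw E p ys q" "length ys = Suc (hop_dist E p q)"
    unfolding hop_dist_def by blast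
  ultimately show "\<exists>xs. walk_betw E p xs q \<and> length xs \<le> Suc n" by auto
next
  assume "\<exists>xs. walk_betw E p xs q \<and> length xs \<le> Suc n"
  then obtain xs where xs: "walk_betw E p xs q" "length xs \<le> Suc n" by blast
  then have "length xs = Suc (length xs - 1)" by (cases xs) (auto simp: walk_betw_def)
  then have "hop_dist E p q \<le> length xs - 1"
    unfolding hop_dist_def using xs by (intro Least_le) metis
  then show "hop_dist E p q \<le> n" using xs by simp
qed

lemma hop_shortest:
  assumes "\<exists>xs. walk_betw E p xs q"
  shows "\<exists>xs. walk_betw E p xs q \<and> length xs = Suc (hop_dist E p q)"
proof -
  obtain xs where xs: "walk_betw E p xs q" using assms by blast
  have ex: "\<exists>k. \<exists>xs. walk_betw E p xs q \<and> length xs = Suc k"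
  proof -
    have "length xs = Suc (length xs - 1)" using xs by (cases xs) (auto simp: walk_betw_def)
    then show ?thesis using xs by blast
  qed
  from LeastI_ex[OF ex] show ?thesis unfolding hop_dist_def by blast
qed

lemma ball_zero:
  assumes conn: "\<And>p q. \<exists>xs. walk_betw E p xs q"
  shows "ballV E p 0 = {p}"
proof -
  have "x \<in> ballV E p 0 \<longleftrightarrow> x = p" for x
  proof -
    have "x \<in> ballV E p 0 \<longleftrightarrow> hop_dist E p x \<le> 0" by (simp add: ballV_def)
    also have "\<dots> \<longleftrightarrow> (\<exists>xs. walk_betw E p xs x \<and> length xs \<le> Suc 0)" using hop_le[OF conn] by blast
    also have "\<dots> \<longleftrightarrow> x = p" using walk_len1 walk_single by fastforce
    finally show ?thesis .
  qed
  then show ?thesis by auto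
qed

lemma ball_mem:
  assumes conn: "\<And>p q. \<exists>xs. walk_betw E p xs q" and j: "j \<ge> 0"
  shows "x \<in> ballV E q j \<longleftrightarrow> (\<exists>ys. walk_betw E q ys x \<and> length ys \<le> Suc (nat j))"
proof -
  have "x \<in> ballV E q j \<longleftrightarrow> hop_dist E q x \<le> nat j"
    using j unfolding ballV_def by auto
  also have "\<dots> \<longleftrightarrow> (\<exists>ys. walk_betw E q ys x \<and> length ys \<le> Suc (nat j))"
    by (rule hop_le[OF conn])
  finally show ?thesis .
qed

lemma ball_Suc:
  assumes conn: "\<And>p q. \<exists>xs. walk_betw E p xs q" and j: "j \<ge> 0"
  shows "ballV E p (j+1) = insert p (\<Union>q\<in>{q. E p q}. ballV E q j)"
proof -
  have nj: "nat (j+1) = Suc (nat j)" using j by simp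
  have "x \<in> ballV E p (j+1) \<longleftrightarrow> x \<in> insert p (\<Union>q\<in>{q. E p q}. ballV E q j)" for x
  proof -
    have "x \<in> ballV E p (j+1) \<longleftrightarrow> (\<exists>xs. walk_betw E p xs x \<and> length xs \<le> Suc (Suc (nat j)))"
      using ball_mem[OF conn, of "j+1" x p] j nj by simp
    also have "\<dots> \<longleftrightarrow> x = p \<or> (\<exists>q. E p q \<and> (\<exists>ys. walk_betw E q ys x \<and> length ys \<le> Suc (nat j)))"
    proof
      assume "\<exists>xs. walk_betw E p xs x \<and> length xs \<le> Suc (Suc (nat j))"
      then obtain xs where xs: "walk_betw E p xs x" "length xs \<le> Suc (Suc (nat j))" by blast
      show "x = p \<or> (\<exists>q. E p q \<and> (\<exists>ys. walk_betw E q ys x \<and> length ys \<le> Suc (nat j)))"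
      proof (cases "length xs \<ge> 2")
        case True
        from walk_Cons_inv[OF xs(1) True] obtain q ys where
          "xs = p # ys" "E p q" "walk_betw E q ys x" "length ys = length xs - 1" by blast
        then show ?thesis using xs(2) by auto
      next
        case False then show ?thesis using walk_len1[OF xs(1)] by simp
      qed
    next
      assume "x = p \<or> (\<exists>q. E p q \<and> (\<exists>ys. walk_betw E q ys x \<and> length ys \<le> Suc (nat j)))"
      then show "\<exists>xs. walk_betw E p xs x \<and> length xs \<le> Suc (Suc (nat j))"
      proof
        assume "x = p" then show ?thesis using walk_single[of E p] by (intro exI[of _ "[p]"]) simp
      next
        assume "\<exists>q. E p q \<and> (\<exists>ys. walk_betw E q ys x \<and> length ys \<le> Suc (nat j))"
        then obtain q ys where "E p q" "walk_betw E q ys x" "length ys \<le> Suc (nat j)" by blast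
        then show ?thesis using walk_Cons[of E p q ys x] by (intro exI[of _ "p # ys"]) simp
      qed
    qed
    also have "\<dots> \<longleftrightarrow> x \<in> insert p (\<Union>q\<in>{q. E p q}. ballV E q j)"
      using ball_mem[OF conn j, of x] by blast
    finally show ?thesis .
  qed
  then show ?thesis by blast
qed

lemma ball_self: "(\<And>p q. \<exists>xs. walk_betw E p xs q) \<Longrightarrow> j \<ge> 0 \<Longrightarrow> p \<in> ballV E p j"
  using hop_le[of E p p 0] walk_single by (fastforce simp: ballV_def)

lemma ominus_mod: "M > 0 \<Longrightarrow> ominus M b a mod M = (b - a) mod M"
  by (auto simp: ominus_def mod_minus_eq)

lemma ominus_le: "M > 0 \<Longrightarrow> ominus M b a \<le> 1"
proof -
  assume "M > 0" then have "0 \<le> (a-b) mod M" by simp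
  then show ?thesis by (auto simp: ominus_def)
qed

lemma ominus_bounds: "M > 0 \<Longrightarrow> loc_comp M a b \<Longrightarrow> -1 \<le> ominus M b a \<and> ominus M b a \<le> 1"
proof -
  assume "M > 0" "loc_comp M a b" then have "0 \<le> (a-b) mod M" "0 \<le> (b-a) mod M" "min ((a - b) mod M) ((b - a) mod M) \<le> 1" by (simp_all add: loc_comp_def)
  then show ?thesis by (auto simp: ominus_def)
qed

lemma delay_mod: "M > 0 \<Longrightarrow> xs \<noteq> [] \<Longrightarrow> delay M r xs mod M = (r (last xs) - r (hd xs)) mod M"
proof (induction M r xs rule: delay.induct)
  case (1 M r x y xs)
  have "delay M r (x # y # xs) mod M = (ominus M (r y) (r x) mod M + delay M r (y # xs) mod M) mod M"
    by (simp add: mod_add_eq)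
  also have "\<dots> = ((r y - r x) mod M + (r (last (y#xs)) - r y) mod M) mod M"
    using 1 by (simp add: ominus_mod)
  also have "\<dots> = (r (last (x#y#xs)) - r (hd (x#y#xs))) mod M"
    by (simp add: mod_add_eq)
  finally show ?case .
qed auto

lemma delay_le: "M > 0 \<Longrightarrow> delay M r xs \<le> int (length xs) - 1 \<or> xs = []"
proof (induction M r xs rule: delay.induct)
  case (1 M r x y xs)
  then show ?case using ominus_le[of M "r y" "r x"] by auto
qed auto

lemma delay_snoc: "xs \<noteq> [] \<Longrightarrow> delay M r (xs @ [y]) = delay M r xs + ominus M (r y) (r (last xs))"
  by (induction M r xs rule: delay.induct) auto

lemma F_union_family:
  assumes sl: "semilattice f" and N: "finite N"
    and A: "\<And>q. q \<in> N \<Longrightarrow> finite (A q) \<and> A q \<noteq> {}"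
  shows "semilattice_set.F f (insert a ((\<lambda>q. semilattice_set.F f (A q)) ` N))
       = semilattice_set.F f (insert a (\<Union>q\<in>N. A q))"
  using N A
proof (induction N rule: finite_induct)
  case empty then show ?case by simp
next
  case (insert n N)
  interpret semilattice_set f by (rule semilattice_set.intro[OF sl])
  have fin: "finite (\<Union>q\<in>N. A q)" using insert.hyps(1) insert.prems by (auto intro!: finite_UN_I)
  have "F (insert a ((\<lambda>q. F (A q)) ` insert n N)) = F (insert (F (A n)) (insert a ((\<lambda>q. F (A q)) ` N)))"
    by (simp add: insert_commute)
  also have "\<dots> = f (F (A n)) (F (insert a ((\<lambda>q. F (A q)) ` N)))"
    by (rule insert) (use insert.hyps in auto)
  also have "\<dots> = f (F (A n)) (F (insert a (\<Union>q\<in>N. A q)))"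
    by (subst insert.IH) (use insert.prems in auto)
  also have "\<dots> = F (A n \<union> insert a (\<Union>q\<in>N. A q))"
    using insert.prems[of n] fin by (subst union) auto
  also have "A n \<union> insert a (\<Union>q\<in>N. A q) = insert a (\<Union>q\<in>insert n N. A q)" by blast
  finally show ?case .
qed



lemma modneq:
  fixes M a :: int assumes "M \<ge> 3"
  shows "(a - 1) mod M \<noteq> a mod M" "(a - 1) mod M \<noteq> (a + 1) mod M" "(a + 1) mod M \<noteq> a mod M"
proof -
  have d1: "\<not> M dvd 1" "\<not> M dvd -1" "\<not> M dvd 2" "\<not> M dvd -2" using assms zdvd_imp_le[of M 1] zdvd_imp_le[of M 2]
    by (auto simp: dvd_minus_iff)
  show "(a - 1) mod M \<noteq> a mod M" using d1 by (simp add: mod_eq_dvd_iff)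
  show "(a - 1) mod M \<noteq> (a + 1) mod M" using d1 mod_eq_dvd_iff[of "a-1" M "a+1"] by simp
  show "(a + 1) mod M \<noteq> a mod M" using d1 mod_eq_dvd_iff[of "a+1" M a] by simp
qed

lemma discrete_ivt:
  fixes g :: "nat \<Rightarrow> int"
  assumes "\<And>t. g (Suc t) \<le> g t + 1" "g 0 \<le> k" "k \<le> g T"
  shows "\<exists>t. g t = k"
  using assms(3)
proof (induction T)
  case 0 then show ?case using assms(2) by (intro exI[of _ 0]) simp
next
  case (Suc T)
  show ?case
  proof (cases "k \<le> g T")
    case True then show ?thesis using Suc.IH by blast
  next
    case False then show ?thesis using Suc.prems assms(1)[of T] by (intro exI[of _ "Suc T"]) simp
  qed
qed

theorem mainTheorem6:
  fixes E :: "'v::finite \<Rightarrow> 'v \<Rightarrow> bool"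
    and f :: "'s \<Rightarrow> 's \<Rightarrow> 's"
    and rho M U :: int
    and r :: "nat \<Rightarrow> 'v \<Rightarrow> int"
    and v0 :: "'v \<Rightarrow> 's"
    and v1 v2 :: "nat \<Rightarrow> 'v \<Rightarrow> 's"
    and S :: "nat \<Rightarrow> 'v set"
    and p0 :: 'v
  assumes card: "card (UNIV :: 'v set) \<ge> 2"
    and sym: "\<And>p q. E p q \<Longrightarrow> E q p"
    and irrefl: "\<And>p. \<not> E p p"
    and conn: "\<And>p q. \<exists>xs. walk_betw E p xs q"
    and rho: "rho \<ge> 1"
    and M: "M \<ge> 3" "(rho + 1) dvd M"
    and sl: "semilattice f"
    and r0_range: "\<And>p. 0 \<le> r 0 p \<and> r 0 p < M"
    and exec: "\<And>t. step M rho E f v0 (r t) (v1 t) (v2 t) (S t) (r (Suc t)) (v1 (Suc t)) (v2 (Suc t))"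
    and fair: "\<And>p t. \<exists>t'\<ge>t. p \<in> S t'"
    and wu0: "WU0 M E (r 0)"
    and p0: "\<And>q. delta M E (r 0) p0 q \<ge> 0"
    and U: "U * (rho + 1) \<ge> r 0 p0 + int (diameter E) + 1"
  shows "\<forall>p. v2 (tcut M E (r 0) p0 S p (U * (rho + 1) + rho)) p
              = semilattice_set.F f (v0 ` ballV E p rho)"
proof -
  interpret SL: semilattice_set f by (rule semilattice_set.intro[OF sl])
  have Mpos: "M > 0" using M by simp
  define L where "L = lifted M E (r 0) p0 S"
  define K where "K = U * (rho+1)"
  define B where "B = (\<lambda>q j. semilattice_set.F f (v0 ` ballV E q j))"
  have LSuc: "\<And>t q. L (Suc t) q = L t q + (if q \<in> S t then 1 else 0)" by (simp add: L_def)
  have L0: "\<And>q. L 0 q = r 0 p0 + delta M E (r 0) p0 q" by (simp add: L_def)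
  have stin: "enabled M E (r t) p \<and> r (Suc t) p = (r t p + 1) mod M \<and>
     (if r t p mod (rho + 1) = rho then v1 (Suc t) p = v0 p \<and> v2 (Suc t) p = v0 p
      else v1 (Suc t) p = v2 t p \<and>
        v2 (Suc t) p = semilattice_set.F f
          (insert (v0 p) ((\<lambda>q. if r t q = r t p then v2 t q else v1 t q) ` {q. E p q})))"
    if pS: "p \<in> S t" for t p
  proof -
    from exec[of t] have A: "\<forall>p\<in>S t. enabled M E (r t) p" and
      B: "\<forall>p. if p \<in> S t then
            r (Suc t) p = (r t p + 1) mod M \<and>
            (if r t p mod (rho + 1) = rho then v1 (Suc t) p = v0 p \<and> v2 (Suc t) p = v0 p
             else v1 (Suc t) p = v2 t p \<and>
                  v2 (Suc t) p = semilattice_set.F f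
                     (insert (v0 p) ((\<lambda>q. if r t q = r t p then v2 t q else v1 t q) ` {q. E p q})))
          else r (Suc t) p = r t p \<and> v1 (Suc t) p = v1 t p \<and> v2 (Suc t) p = v2 t p"
      unfolding step_def by blast+
    show ?thesis using A pS B[rule_format, of p, unfolded if_P[OF pS]] by blast
  qed
  have stout: "r (Suc t) p = r t p \<and> v1 (Suc t) p = v1 t p \<and> v2 (Suc t) p = v2 t p"
    if pS: "p \<notin> S t" for t p
  proof -
    from exec[of t] have
      B: "\<forall>p. if p \<in> S t then
            r (Suc t) p = (r t p + 1) mod M \<and>
            (if r t p mod (rho + 1) = rho then v1 (Suc t) p = v0 p \<and> v2 (Suc t) p = v0 p
             else v1 (Suc t) p = v2 t p \<and>
                  v2 (Suc t) p = semilattice_set.F f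
                     (insert (v0 p) ((\<lambda>q. if r t q = r t p then v2 t q else v1 t q) ` {q. E p q})))
          else r (Suc t) p = r t p \<and> v1 (Suc t) p = v1 t p \<and> v2 (Suc t) p = v2 t p"
      unfolding step_def by blast
    show ?thesis using B[rule_format, of p, unfolded if_not_P[OF pS]] by blast
  qed
  have delta_eq: "delta M E (r 0) p0 q = delay M (r 0) xs" if "walk_betw E p0 xs q" for q xs
  proof -
    have "walk_betw E p0 (SOME xs. walk_betw E p0 xs q) q" using conn by (rule someI_ex)
    then show ?thesis using wu0 that unfolding WU0_def delta_def by blast
  qed
  have finD: "finite {hop_dist E p q | p q. True}"
  proof -
    have "{hop_dist E p q | p q. True} = (\<lambda>(p,q). hop_dist E p q) ` UNIV" by auto
    then show ?thesis by simp
  qed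
  have delta_le: "delta M E (r 0) p0 q \<le> int (diameter E)" for q
  proof -
    obtain xs where xs: "walk_betw E p0 xs q" "length xs = Suc (hop_dist E p0 q)"
      using hop_shortest[OF conn] by blast
    have "delta M E (r 0) p0 q = delay M (r 0) xs" using delta_eq[OF xs(1)] .
    also have "\<dots> \<le> int (hop_dist E p0 q)" using delay_le[OF Mpos, of "r 0" xs] xs by auto
    also have "hop_dist E p0 q \<le> diameter E" unfolding diameter_def
      by (rule Max_ge[OF finD]) blast
    finally show ?thesis by simp
  qed
  have delta_mod: "delta M E (r 0) p0 q mod M = (r 0 q - r 0 p0) mod M" for q
  proof -
    obtain xs where xs: "walk_betw E p0 xs q" using conn by blast
    then have "xs \<noteq> []" "hd xs = p0" "last xs = q" by (auto simp: walk_betw_def)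
    then show ?thesis using delta_eq[OF xs] delay_mod[OF Mpos, of xs "r 0"] by simp
  qed
  have Lmod: "r t q = L t q mod M" for t q
  proof (induction t)
    case 0
    have "L 0 q mod M = (r 0 p0 + delta M E (r 0) p0 q mod M) mod M" by (simp add: L0 mod_add_right_eq)
    also have "\<dots> = r 0 q mod M" by (simp add: delta_mod mod_add_right_eq)
    also have "\<dots> = r 0 q" using r0_range[of q] by simp
    finally show ?case by simp
  next
    case (Suc t)
    show ?case
    proof (cases "q \<in> S t")
      case True
      then show ?thesis using stin[OF True] Suc by (simp add: LSuc mod_add_left_eq)
    next
      case False
      then show ?thesis using stout[OF False] Suc by (simp add: LSuc)
    qed
  qed
  have L0le: "L 0 q \<le> K - 1" for q
    using delta_le[of q] U by (simp add: L0 K_def)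
  have nbr_gen: "L t q = L t p \<or> L t q = L t p + 1"
    if "enabled M E (r t) p" "E p q" "\<bar>L t p - L t q\<bar> \<le> 1" for t p q
  proof -
    have "r t q = r t p \<or> r t q = (r t p + 1) mod M" using that unfolding enabled_def by blast
    then have "L t q mod M = L t p mod M \<or> L t q mod M = (L t p + 1) mod M"
      by (simp add: Lmod mod_add_left_eq)
    moreover have "L t q \<noteq> L t p - 1"
    proof
      assume "L t q = L t p - 1"
      then show False using calculation modneq[OF M(1), of "L t p"] by auto
    qed
    ultimately show ?thesis using that(3) by auto
  qed
  have Lnb: "\<forall>p q. E p q \<longrightarrow> \<bar>L t p - L t q\<bar> \<le> 1" for t
  proof (induction t)
    case 0
    show ?case
    proof (intro allI impI)
      fix p q assume Epq: "E p q"
      obtain xs where xs: "walk_betw E p0 xs p" using conn by blast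
      then have "xs \<noteq> []" "last xs = p" by (auto simp: walk_betw_def)
      have "delta M E (r 0) p0 q = delay M (r 0) (xs @ [q])" using delta_eq walk_snoc[OF xs Epq] by blast
      also have "\<dots> = delta M E (r 0) p0 p + ominus M (r 0 q) (r 0 p)"
        using delay_snoc[OF \<open>xs \<noteq> []\<close>] delta_eq[OF xs] \<open>last xs = p\<close> by simp
      finally have "L 0 q = L 0 p + ominus M (r 0 q) (r 0 p)" by (simp add: L0)
      moreover have "loc_comp M (r 0 p) (r 0 q)" using wu0 Epq unfolding WU0_def WU_def by blast
      ultimately show "\<bar>L 0 p - L 0 q\<bar> \<le> 1" using ominus_bounds[OF Mpos] by fastforce
    qed
  next
    case (Suc t)
    show ?case
    proof (intro allI impI)
      fix p q assume Epq: "E p q"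
      have IH: "\<bar>L t p - L t q\<bar> \<le> 1" "\<bar>L t q - L t p\<bar> \<le> 1" using Suc Epq sym by auto
      show "\<bar>L (Suc t) p - L (Suc t) q\<bar> \<le> 1"
      proof (cases "p \<in> S t"; cases "q \<in> S t")
        assume "p \<in> S t" "q \<notin> S t"
        then show ?thesis using nbr_gen[OF conjunct1[OF stin] Epq IH(1)] by (auto simp: LSuc)
      next
        assume "p \<notin> S t" "q \<in> S t"
        then show ?thesis using nbr_gen[OF conjunct1[OF stin] sym[OF Epq] IH(2)] by (auto simp: LSuc)
      qed (use IH in \<open>auto simp: LSuc\<close>)
    qed
  qed
  have nbr: "L t q = L t p \<or> L t q = L t p + 1" if "p \<in> S t" "E p q" for t p q
    using nbr_gen[OF conjunct1[OF stin[OF that(1)]] that(2)] Lnb[of t] that(2) by blast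
  have req: "r t q = r t p \<longleftrightarrow> L t q = L t p" if "p \<in> S t" "E p q" for t p q
    using nbr[OF that] modneq(3)[OF M(1), of "L t p"] by (auto simp: Lmod)
  have resetc: "r t p mod (rho+1) = rho \<longleftrightarrow> L t p mod (rho + 1) = rho" for t p
    using M(2) by (simp add: Lmod mod_mod_cancel)
  have Kres: "(K - 1) mod (rho+1) = rho"
  proof -
    have "K - 1 = rho + (U - 1) * (rho + 1)" unfolding K_def by algebra
    then show ?thesis using rho by simp
  qed
  have Kres2: "c mod (rho+1) \<noteq> rho" if "K \<le> c" "c \<le> K + rho - 1" for c
  proof -
    have "c = (c - K) + U * (rho + 1)" unfolding K_def by simp
    then have "c mod (rho+1) = ((c - K) + U * (rho + 1)) mod (rho+1)" by (rule arg_cong)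
    also have "\<dots> = (c - K) mod (rho+1)" by (rule mod_mult_self1)
    also have "\<dots> = c - K" using that by (intro mod_pos_pos_trivial) auto
    finally show ?thesis using that by simp
  qed
  have fin_ball: "finite (v0 ` ballV E q j)" for q j by simp
  have ne_ball: "v0 ` ballV E q j \<noteq> {}" if "j \<ge> 0" for q j using ball_self[OF conn that] by blast
  have B0: "B q 0 = v0 q" for q unfolding B_def using ball_zero[OF conn, of q] by simp
  have BSuc: "B q (j+1) = semilattice_set.F f (insert (v0 q) ((\<lambda>x. B x j) ` {x. E q x}))"
    if "j \<ge> 0" for q j
  proof -
    have "semilattice_set.F f (insert (v0 q) ((\<lambda>x. B x j) ` {x. E q x}))
       = semilattice_set.F f (insert (v0 q) (\<Union>x\<in>{x. E q x}. v0 ` ballV E x j))"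
      unfolding B_def by (rule F_union_family[OF sl]) (use ne_ball[OF that] in auto)
    also have "insert (v0 q) (\<Union>x\<in>{x. E q x}. v0 ` ballV E x j) = v0 ` ballV E q (j+1)"
      unfolding ball_Suc[OF conn that] by blast
    finally show ?thesis unfolding B_def by simp
  qed
  have Inv: "\<forall>q. (K \<le> L t q \<and> L t q \<le> K + rho \<longrightarrow> v2 t q = B q (L t q - K)) \<and>
      (K + 1 \<le> L t q \<and> L t q \<le> K + rho \<longrightarrow> v1 t q = B q (L t q - K - 1)) \<and>
      (L t q = K \<longrightarrow> v1 t q = v0 q)" for t
  proof (induction t)
    case 0
    show ?case
    proof
      fix q have "L 0 q < K" using L0le[of q] by simp
      then show "(K \<le> L 0 q \<and> L 0 q \<le> K + rho \<longrightarrow> v2 0 q = B q (L 0 q - K)) \<and>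
      (K + 1 \<le> L 0 q \<and> L 0 q \<le> K + rho \<longrightarrow> v1 0 q = B q (L 0 q - K - 1)) \<and>
      (L 0 q = K \<longrightarrow> v1 0 q = v0 q)" by simp
    qed
  next
    case (Suc t)
    show ?case
    proof
      fix q
      show "(K \<le> L (Suc t) q \<and> L (Suc t) q \<le> K + rho \<longrightarrow> v2 (Suc t) q = B q (L (Suc t) q - K)) \<and>
      (K + 1 \<le> L (Suc t) q \<and> L (Suc t) q \<le> K + rho \<longrightarrow> v1 (Suc t) q = B q (L (Suc t) q - K - 1)) \<and>
      (L (Suc t) q = K \<longrightarrow> v1 (Suc t) q = v0 q)"
      proof (cases "q \<in> S t")
        case False
        then show ?thesis using stout[OF False] Suc.IH by (simp add: LSuc)
      next
        case qS: True
        define c where "c = L t q"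
        have Lc: "L (Suc t) q = c + 1" using qS by (simp add: LSuc c_def)
        consider "c + 1 < K \<or> c + 1 > K + rho" | "c = K - 1" | "K \<le> c \<and> c \<le> K + rho - 1" by linarith
        then show ?thesis
        proof cases
          case 1 then show ?thesis unfolding Lc using rho by auto
        next
          case 2
          then have "r t q mod (rho+1) = rho" using resetc Kres c_def by simp
          then have "v1 (Suc t) q = v0 q" "v2 (Suc t) q = v0 q" using stin[OF qS] by auto
          then show ?thesis unfolding Lc using 2 B0 by auto
        next
          case 3
          then have nr: "\<not> r t q mod (rho+1) = rho" using resetc Kres2 c_def by simp
          have v1n: "v1 (Suc t) q = v2 t q" and v2n: "v2 (Suc t) q = semilattice_set.F f
              (insert (v0 q) ((\<lambda>x. if r t x = r t q then v2 t x else v1 t x) ` {x. E q x}))"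
            using stin[OF qS] nr by auto
          have v2q: "v2 t q = B q (c - K)" using Suc.IH 3 c_def by auto
          have img: "(\<lambda>x. if r t x = r t q then v2 t x else v1 t x) ` {x. E q x} = (\<lambda>x. B x (c - K)) ` {x. E q x}"
          proof (rule image_cong[OF refl])
            fix x assume "x \<in> {x. E q x}"
            then have Eqx: "E q x" by simp
            show "(if r t x = r t q then v2 t x else v1 t x) = B x (c - K)"
            proof (cases "L t x = c")
              case True
              then show ?thesis using req[OF qS Eqx] Suc.IH[rule_format, of x] 3 c_def by auto
            next
              case False
              then have "L t x = c + 1" using nbr[OF qS Eqx] c_def by auto
              then show ?thesis using req[OF qS Eqx] Suc.IH[rule_format, of x] 3 c_def by auto
            qed
          qed
          have "v2 (Suc t) q = B q (c - K + 1)" unfolding v2n img using BSuc[of "c - K" q] 3 by simp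
          then show ?thesis unfolding Lc using v1n v2q 3 by (auto simp: algebra_simps)
        qed
      qed
    qed
  qed
  show ?thesis
  proof
    fix p
    have unb: "\<exists>t. L t p \<ge> L 0 p + int n" for n
    proof (induction n)
      case 0 then show ?case by auto
    next
      case (Suc n)
      then obtain t where t: "L t p \<ge> L 0 p + int n" by blast
      obtain t' where t': "t' \<ge> t" "p \<in> S t'" using fair by blast
      have "L t p \<le> L t' p" using t'(1)
        by (induction t' rule: dec_induct) (auto simp: LSuc)
      then have "L (Suc t') p \<ge> L 0 p + int (Suc n)" using t t'(2) by (simp add: LSuc)
      then show ?case by blast
    qed
    obtain T where T0: "L T p \<ge> L 0 p + int (nat (K + rho - L 0 p))" using unb by blast
    have T: "L T p \<ge> K + rho" using T0 L0le[of p] rho by simp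
    have "\<exists>t. L t p = K + rho"
      by (rule discrete_ivt[of "\<lambda>t. L t p", OF _ _ T]) (use L0le[of p] rho in \<open>auto simp: LSuc\<close>)
    then have "L (tcut M E (r 0) p0 S p (K + rho)) p = K + rho"
      unfolding tcut_def L_def by (rule LeastI_ex)
    then show "v2 (tcut M E (r 0) p0 S p (U * (rho + 1) + rho)) p = semilattice_set.F f (v0 ` ballV E p rho)"
      using Inv[of "tcut M E (r 0) p0 S p (K + rho)"] rho unfolding K_def B_def by auto
  qed
qed

end
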